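(* Let $\gamma$ be a generator of $\mathbb{F}_{q^m}^*$ and let $\beta_1,\dots,\beta_m\in\mathbb{F}_{q^m}$ be linearly independent over $\mathbb{F}_q$. Let $n=(q-1)m$ and $1\le k\le n$. For $\ell\in\{0,1,\dots,q-2\}$ let $M_\ell$ be the $k\times m$ matrix over $\mathbb{F}_{q^m}$ with $(i,j)$ entry $\gamma^{\ell(1+q+\cdots+q^{i-1})}\beta_j^{q^i}$ for $i=0,\dots,k-1$, $j=1,\dots,m$ (row $i=0$ is $(\beta_1,\dots,\beta_m)$), and let $M=[M_0\,|\,M_1\,|\,\cdots\,|\,M_{q-2}]$ be the $k\times n$ matrix. Then for every nonzero $\lambda\in\mathbb{F}_{q^m}^k$, $\sum_{\ell=0}^{q-2}\mathrm{rk}_{\mathbb{F}_q}(\lambda^T M_\ell)\ge n-k+1$; i.e., $M$ generates a maximum sum-rank distance code with respect to the partition of $[n]$ into the $q-1$ blocks of size $m$ corresponding to $M_0,\dots,M_{q-2}$.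
   Context: Fix a basis of $\mathbb{F}_{q^m}$ over $\mathbb{F}_q$. For a row vector $z=(z_1,\dots,z_m)\in\mathbb{F}_{q^m}^m$, $\mathrm{rk}_{\mathbb{F}_q}(z)$ denotes the rank over $\mathbb{F}_q$ of the $m\times m$ matrix over $\mathbb{F}_q$ whose $j$-th column is the coordinate vector of $z_j$ in the fixed basis (this does not depend on the basis). *)

theory Defs
  imports "Jordan_Normal_Form.DL_Rank" "HOL-Library.Cardinality"
begin

text \<open>The base field F_q is a finite field type 'f; the extension field F_{q^m}
  is a finite field type 'k, and emb is an injective field homomorphism 'f to 'k.\<close>

definition field_emb :: "('f::field \<Rightarrow> 'k::field) \<Rightarrow> bool" where
  "field_emb emb \<longleftrightarrow> inj emb \<and> emb 0 = 0 \<and> emb 1 = 1 \<and>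
     (\<forall>x y. emb (x + y) = emb x + emb y) \<and> (\<forall>x y. emb (x * y) = emb x * emb y)"

definition lin_indep_Fq :: "('f::field \<Rightarrow> 'k::field) \<Rightarrow> nat \<Rightarrow> (nat \<Rightarrow> 'k) \<Rightarrow> bool" where
  "lin_indep_Fq emb m b \<longleftrightarrow>
     (\<forall>c :: nat \<Rightarrow> 'f. (\<Sum>j<m. emb (c j) * b j) = 0 \<longrightarrow> (\<forall>j<m. c j = 0))"

definition is_basis_Fq :: "('f::field \<Rightarrow> 'k::field) \<Rightarrow> nat \<Rightarrow> (nat \<Rightarrow> 'k) \<Rightarrow> bool" where
  "is_basis_Fq emb m b \<longleftrightarrow> lin_indep_Fq emb m b \<and>
     (\<forall>x. \<exists>c :: nat \<Rightarrow> 'f. x = (\<Sum>j<m. emb (c j) * b j))"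

definition coord :: "('f::field \<Rightarrow> 'k::field) \<Rightarrow> nat \<Rightarrow> (nat \<Rightarrow> 'k) \<Rightarrow> 'k \<Rightarrow> 'f vec" where
  "coord emb m b x = (THE v. v \<in> carrier_vec m \<and> x = (\<Sum>t<m. emb (v $ t) * b t))"

definition coord_mat :: "('f::field \<Rightarrow> 'k::field) \<Rightarrow> nat \<Rightarrow> (nat \<Rightarrow> 'k) \<Rightarrow> (nat \<Rightarrow> 'k) \<Rightarrow> 'f mat" where
  "coord_mat emb m b z = mat m m (\<lambda>(i, j). coord emb m b (z j) $ i)"

definition rk_Fq :: "('f::field \<Rightarrow> 'k::field) \<Rightarrow> nat \<Rightarrow> (nat \<Rightarrow> 'k) \<Rightarrow> (nat \<Rightarrow> 'k) \<Rightarrow> nat" where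
  "rk_Fq emb m b z = vec_space.rank m (coord_mat emb m b z)"

definition M_entry :: "nat \<Rightarrow> 'k::field \<Rightarrow> (nat \<Rightarrow> 'k) \<Rightarrow> nat \<Rightarrow> nat \<Rightarrow> nat \<Rightarrow> 'k" where
  "M_entry q \<gamma> \<beta> l i j = \<gamma> ^ (l * (\<Sum>t<i. q ^ t)) * (\<beta> j) ^ (q ^ i)"

definition lamM :: "nat \<Rightarrow> nat \<Rightarrow> 'k::field \<Rightarrow> (nat \<Rightarrow> 'k) \<Rightarrow> (nat \<Rightarrow> 'k) \<Rightarrow> nat \<Rightarrow> nat \<Rightarrow> 'k" where
  "lamM q k \<gamma> \<beta> lam l j = (\<Sum>i<k. lam i * M_entry q \<gamma> \<beta> l i j)"

end

theory Submission imports Defs "HOL-Computational_Algebra.Polynomial" begin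
lemma (in vectorspace) card_carrier_le:
  assumes fin: "finite (carrier K)" and fd: fin_dim
  shows "card (carrier V) \<le> card (carrier K) ^ dim"
proof -
  obtain B where B: "finite B" "basis B" using finite_basis_exists[OF fd] by blast
  have Bc: "B \<subseteq> carrier V" and gen: "span B = carrier V" using B(2) unfolding basis_def by auto
  have "carrier V \<subseteq> (\<lambda>a. lincomb a B) ` (B \<rightarrow>\<^sub>E carrier K)"
  proof
    fix v assume "v \<in> carrier V"
    then obtain a where a: "a \<in> B \<rightarrow> carrier K" "lincomb a B = v"
      using finite_in_span[OF B(1) Bc] gen by auto
    have "lincomb (restrict a B) B = lincomb a B"
      by (rule lincomb_cong[OF refl Bc]) (use a in auto)
    moreover have "restrict a B \<in> B \<rightarrow>\<^sub>E carrier K" using a by auto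
    ultimately show "v \<in> (\<lambda>a. lincomb a B) ` (B \<rightarrow>\<^sub>E carrier K)" using a(2) by (metis image_eqI)
  qed
  hence "card (carrier V) \<le> card ((\<lambda>a. lincomb a B) ` (B \<rightarrow>\<^sub>E carrier K))"
    by (intro card_mono finite_imageI finite_PiE B(1) fin)
  also have "\<dots> \<le> card (B \<rightarrow>\<^sub>E carrier K)" by (rule card_image_le) (intro finite_PiE B(1) fin)
  also have "\<dots> = card (carrier K) ^ card B" by (simp only: card_PiE B(1) prod_constant)
  finally show ?thesis by (simp only: dim_basis[OF B])
qed

context vec_space begin
lemma col_space_card:
  assumes A: "A \<in> carrier_mat n nc" and fin: "finite (UNIV::'a set)"
  shows "card {A *\<^sub>v x |x. x \<in> carrier_vec nc} \<le> CARD('a) ^ rank A"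
proof -
  have S: "set (cols A) \<subseteq> carrier_vec n" using cols_dim A carrier_matD(1) by blast
  have vs: "vectorspace class_ring (vs (span (set (cols A))))"
    by (rule subspace_is_vs[OF span_is_subspace]) (simp add: S)
  have fd: "vectorspace.fin_dim class_ring (vs (span (set (cols A))))" by (rule fin_dim_span_cols[OF A])
  have "card (carrier (vs (span (set (cols A))))) \<le> card (carrier (class_ring::'a ring)) ^ vectorspace.dim class_ring (vs (span (set (cols A))))"
    by (rule vectorspace.card_carrier_le[OF vs]) (simp_all only: fd fin class_ring_simps)
  moreover have "carrier (vs (span (set (cols A)))) = {A *\<^sub>v x |x. x \<in> carrier_vec nc}"
  proof -
    have "carrier (vs (span (set (cols A)))) = col_space A" unfolding col_space_def by simp
    also have "\<dots> = {y\<in>carrier_vec (dim_row A). \<exists>x\<in>carrier_vec (dim_col A). A *\<^sub>v x = y}"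
      by (rule col_space_eq[OF A])
    also have "\<dots> = {A *\<^sub>v x |x. x \<in> carrier_vec nc}"
    proof -
      have dr: "dim_row A = n" "dim_col A = nc" using A by auto
      show ?thesis unfolding dr using A by (auto intro: mult_mat_vec_carrier)
    qed
    finally show ?thesis .
  qed
  ultimately show ?thesis unfolding rank_def by (simp only: class_ring_simps)
qed
end

lemma fin_field_pow_card:
  fixes x :: "'a::{finite,field}"
  shows "x ^ CARD('a) = x"
proof (cases "x = 0")
  case False
  have "x * (\<Prod>y\<in>UNIV-{0}. x * y) = x * x ^ (card (UNIV :: 'a set) - 1) * \<Prod>(UNIV-{0})"
    by (simp add: prod.distrib mult_ac)
  also have "x * x ^ (card (UNIV :: 'a set) - 1) = x ^ Suc (card (UNIV :: 'a set) - 1)"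
    by (subst power_Suc) auto
  also have "Suc (card (UNIV :: 'a set) - 1) = card (UNIV :: 'a set)"
    using finite_UNIV_card_ge_0[where ?'a = 'a] by simp
  also have "(\<Prod>y\<in>UNIV-{0}. x * y) = (\<Prod>y\<in>UNIV-{0}. y)"
    by (rule prod.reindex_bij_witness[of _ "\<lambda>y. y / x" "\<lambda>y. x * y"]) (use False in auto)
  finally show ?thesis
    by simp
qed (use finite_UNIV_card_ge_0[where ?'a = 'a] in auto)

lemma card_field_ge2: "CARD('a::{finite,field}) \<ge> 2"
proof -
  have "card {0::'a, 1} \<le> CARD('a)" by (rule card_mono) auto
  thus ?thesis by simp
qed

lemma binom_vanish:
  assumes "0 < i" "i < CARD('a::{finite,field})"
  shows "of_nat (CARD('a) choose i) = (0::'a)"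
proof -
  define Q where "Q = CARD('a)"
  have Q2: "Q \<ge> 2" unfolding Q_def by (rule card_field_ge2)
  define p1 :: "'a poly" where "p1 = [:1,1:] ^ Q"
  define p2 :: "'a poly" where "p2 = monom 1 Q + 1"
  have "p1 = p2"
  proof (rule poly_eqI_degree_lead_coeff[where n = Q and A = UNIV])
    show "coeff p1 Q = coeff p2 Q" unfolding p1_def p2_def
      using Q2 by (simp add: coeff_linear_poly_power coeff_monom)
    show "Q \<le> card (UNIV::'a set)" unfolding Q_def by simp
    show "degree p1 \<le> Q" unfolding p1_def
      using degree_power_le[of "[:1,1::'a:]" Q] by simp
    show "degree p2 \<le> Q" unfolding p2_def
      by (rule order.trans[OF degree_add_le]) (auto simp: degree_monom_le)
    fix z :: 'a
    show "poly p1 z = poly p2 z" unfolding p1_def p2_def Q_def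
      by (simp add: poly_monom fin_field_pow_card add.commute)
  qed
  hence "coeff p1 i = coeff p2 i" by simp
  thus ?thesis unfolding p1_def p2_def Q_def[symmetric]
    using assms by (simp add: coeff_linear_poly_power coeff_monom Q_def)
qed

lemma field_emb_ofnat: "field_emb emb \<Longrightarrow> emb (of_nat n) = of_nat n"
  by (induction n) (auto simp: field_emb_def)

lemma field_emb_sum: "field_emb emb \<Longrightarrow> emb (sum g A) = (\<Sum>x\<in>A. emb (g x))"
  by (induction A rule: infinite_finite_induct) (auto simp: field_emb_def)

lemma field_emb_pow: "field_emb emb \<Longrightarrow> emb (x ^ n) = emb x ^ n"
  by (induction n) (auto simp: field_emb_def)

lemma field_emb_minus: "field_emb emb \<Longrightarrow> emb (x - y) = emb x - emb y"
proof -
  assume e: "field_emb emb"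
  have "emb (x - y) + emb y = emb x" using e unfolding field_emb_def by (metis diff_add_cancel)
  thus ?thesis by (simp add: eq_diff_eq)
qed

lemma frob_add:
  fixes emb :: "'f::{finite,field} \<Rightarrow> 'k::field"
  assumes e: "field_emb emb" and q: "q = CARD('f)"
  shows "(x + y :: 'k) ^ q = x ^ q + y ^ q"
proof -
  have q2: "q \<ge> 2" unfolding q by (rule card_field_ge2)
  have "(x + y) ^ q = (\<Sum>k\<le>q. of_nat (q choose k) * x ^ k * y ^ (q - k))"
    by (rule binomial_ring)
  also have "\<dots> = (\<Sum>k\<in>{0,q}. of_nat (q choose k) * x ^ k * y ^ (q - k))"
  proof (intro sum.mono_neutral_right ballI)
    fix k assume "k \<in> {..q} - {0, q}"
    hence k: "k > 0" "k < q" by auto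
    have "of_nat (q choose k) = emb (of_nat (q choose k))" using field_emb_ofnat[OF e] by simp
    also have "\<dots> = 0" using binom_vanish[where 'a='f, OF k(1) k(2)[unfolded q]] e
      unfolding q field_emb_def by simp
    finally show "of_nat (q choose k) * x ^ k * y ^ (q - k) = 0" by simp
  qed auto
  finally show ?thesis using q2 by (simp add: add_ac)
qed
definition Dop :: "nat \<Rightarrow> 'k::field \<Rightarrow> 'k \<Rightarrow> 'k" where
  "Dop q c y = c * y ^ q"

definition Ev :: "nat \<Rightarrow> (nat \<Rightarrow> 'k::field) \<Rightarrow> nat \<Rightarrow> 'k \<Rightarrow> 'k \<Rightarrow> 'k" where
  "Ev q lam d c y = (\<Sum>i<d. lam i * (Dop q c ^^ i) y)"

locale fqs =
  fixes emb :: "'f::{finite,field} \<Rightarrow> 'k::{finite,field}" and q :: nat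
  assumes emb: "field_emb emb" and q: "q = CARD('f)"
begin

lemma q2: "q \<ge> 2" unfolding q by (rule card_field_ge2)

lemma padd: "(x + y :: 'k) ^ q = x ^ q + y ^ q"
  by (rule frob_add[OF emb q])

lemma pzero: "(0::'k) ^ q = 0" using q2 by simp

lemma pneg: "(- x :: 'k) ^ q = - (x ^ q)"
proof -
  have "(x + - x) ^ q = x ^ q + (- x) ^ q" by (rule padd)
  thus ?thesis using pzero by (simp add: eq_neg_iff_add_eq_0 add.commute)
qed

lemma pdiff: "(x - y :: 'k) ^ q = x ^ q - y ^ q"
  using padd[of x "- y"] pneg[of y] by simp

lemma pemb: "emb a ^ q = emb a"
  using field_emb_pow[OF emb, of a q] fin_field_pow_card[of a] q by simp

lemma pemb_iter: "emb a ^ (q ^ i) = emb a"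
proof (induction i)
  case (Suc i)
  have "emb a ^ (q ^ Suc i) = (emb a ^ q) ^ (q ^ i)" by (simp add: power_mult mult.commute)
  thus ?case using Suc pemb by simp
qed simp

lemma D_add: "(Dop q (c::'k) ^^ i) (x + y) = (Dop q c ^^ i) x + (Dop q c ^^ i) y"
  by (induction i) (simp_all add: Dop_def padd distrib_left)

lemma D_diff: "(Dop q (c::'k) ^^ i) (x - y) = (Dop q c ^^ i) x - (Dop q c ^^ i) y"
  by (induction i) (simp_all add: Dop_def pdiff right_diff_distrib)

lemma D_zero: "(Dop q (c::'k) ^^ i) 0 = 0"
  using q2 by (induction i) (simp_all add: Dop_def pzero)

lemma D_mult: "(Dop q (c::'k) ^^ i) (a * y) = a ^ (q ^ i) * (Dop q c ^^ i) y"
proof (induction i)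
  case (Suc i)
  have "(Dop q c ^^ Suc i) (a * y) = Dop q c ((Dop q c ^^ i) (a * y))" by simp
  also have "\<dots> = c * (a ^ (q ^ i) * (Dop q c ^^ i) y) ^ q"
    by (simp only: Suc.IH Dop_def[of q c "a ^ (q ^ i) * (Dop q c ^^ i) y"])
  also have "\<dots> = a ^ (q ^ i * q) * (c * ((Dop q c ^^ i) y) ^ q)"
    using power_mult[of a "q^i" q, symmetric] by (simp only: power_mult_distrib mult_ac)
  also have "\<dots> = a ^ (q ^ Suc i) * (Dop q c ^^ Suc i) y"
    by (simp only: funpow.simps(2) comp_def Dop_def[of q c "(Dop q c ^^ i) y"] power_Suc mult.commute)
  finally show ?case .
qed simp

lemma D_emb: "(Dop q (c::'k) ^^ i) (emb a * y) = emb a * (Dop q c ^^ i) y"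
  using D_mult pemb_iter by simp

lemma D_formula: "(Dop q (c::'k) ^^ i) y = c ^ (\<Sum>t<i. q ^ t) * y ^ (q ^ i)"
proof (induction i arbitrary: y)
  case (Suc i)
  have "(Dop q c ^^ Suc i) y = (Dop q c ^^ i) (c * y ^ q)"
    by (simp only: funpow_Suc_right comp_def Dop_def)
  also have "\<dots> = c ^ (q ^ i) * (c ^ (\<Sum>t<i. q ^ t) * (y ^ q) ^ (q ^ i))"
    by (simp add: D_mult Suc)
  also have "\<dots> = c ^ (\<Sum>t<Suc i. q ^ t) * y ^ (q ^ Suc i)"
    by (simp add: power_add power_mult mult_ac)
  finally show ?case .
qed simp

lemma Ev_add: "Ev q (lam :: nat \<Rightarrow> 'k) d c (x + y) = Ev q lam d c x + Ev q lam d c y"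
  unfolding Ev_def by (simp add: D_add distrib_left sum.distrib)

lemma Ev_diff: "Ev q (lam :: nat \<Rightarrow> 'k) d c (x - y) = Ev q lam d c x - Ev q lam d c y"
  unfolding Ev_def by (simp add: D_diff right_diff_distrib sum_subtractf)

lemma Ev_zero: "Ev q (lam :: nat \<Rightarrow> 'k) d c 0 = 0"
  unfolding Ev_def by (simp add: D_zero)

lemma Ev_emb: "Ev q (lam :: nat \<Rightarrow> 'k) d c (emb a * y) = emb a * Ev q lam d c y"
  unfolding Ev_def D_emb by (simp add: sum_distrib_left mult.left_commute)

lemma Ev_sum: "Ev q (lam :: nat \<Rightarrow> 'k) d c (\<Sum>j\<in>J. emb (g j) * z j) = (\<Sum>j\<in>J. emb (g j) * Ev q lam d c (z j))"
  by (induction J rule: infinite_finite_induct) (simp_all add: Ev_zero Ev_add Ev_emb)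

text \<open>Right division by x - a.\<close>
lemma division:
  "\<exists>\<mu> r. (\<forall>c y. Ev q (lam :: nat \<Rightarrow> 'k) (Suc d) c y = Ev q \<mu> d c (c * y ^ q - a * y) + r * y) \<and>
         (d > 0 \<longrightarrow> \<mu> (d - 1) = lam d)"
proof (induction d arbitrary: lam)
  case 0
  show ?case by (rule exI[of _ "\<lambda>_. 0"], rule exI[of _ "lam 0"]) (simp add: Ev_def)
next
  case (Suc e)
  define lam' where "lam' = lam(e := lam e + lam (Suc e) * a ^ (q ^ e))"
  obtain \<mu>' r where IH: "\<And>c y. Ev q lam' (Suc e) c y = Ev q \<mu>' e c (c * y ^ q - a * y) + r * y"
    using Suc.IH[of lam'] by blast
  define \<mu> where "\<mu> = \<mu>'(e := lam (Suc e))"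
  have "Ev q lam (Suc (Suc e)) c y = Ev q \<mu> (Suc e) c (c * y ^ q - a * y) + r * y" for c y
  proof -
    let ?D = "\<lambda>i. (Dop q c ^^ i)"
    have s1: "(\<Sum>i<e. lam' i * ?D i y) = (\<Sum>i<e. lam i * ?D i y)"
      by (rule sum.cong) (auto simp: lam'_def)
    have s2: "(\<Sum>i<e. \<mu> i * ?D i (c * y ^ q - a * y)) = (\<Sum>i<e. \<mu>' i * ?D i (c * y ^ q - a * y))"
      by (rule sum.cong) (auto simp: \<mu>_def)
    have E1: "Ev q lam' (Suc e) c y = Ev q lam (Suc e) c y + lam (Suc e) * a ^ (q ^ e) * ?D e y"
      unfolding Ev_def by (simp add: s1 lam'_def distrib_right)
    have E2: "Ev q \<mu> (Suc e) c (c * y ^ q - a * y) = Ev q \<mu>' e c (c * y ^ q - a * y) + lam (Suc e) * ?D e (c * y ^ q - a * y)"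
      unfolding Ev_def by (simp add: s2 \<mu>_def)
    have De: "?D e (c * y ^ q - a * y) = ?D (Suc e) y - a ^ (q ^ e) * ?D e y"
    proof -
      have "?D (Suc e) y = ?D e (c * y ^ q)" by (simp only: funpow_Suc_right comp_def Dop_def)
      thus ?thesis by (simp add: D_diff D_mult)
    qed
    define X where "X = ?D (Suc e) y"
    define Z where "Z = ?D e y"
    define W where "W = ?D e (c * y ^ q - a * y)"
    have De': "W = X - a ^ (q ^ e) * Z" unfolding X_def Z_def W_def by (rule De)
    have E1': "Ev q lam' (Suc e) c y = Ev q lam (Suc e) c y + lam (Suc e) * a ^ (q ^ e) * Z"
      unfolding Z_def by (rule E1)
    have E2': "Ev q \<mu> (Suc e) c (c * y ^ q - a * y) = Ev q \<mu>' e c (c * y ^ q - a * y) + lam (Suc e) * W"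
      unfolding W_def by (rule E2)
    have E3: "Ev q lam (Suc (Suc e)) c y = Ev q lam (Suc e) c y + lam (Suc e) * X"
      unfolding Ev_def X_def by simp
    show ?thesis unfolding E3 E2' De' using E1' IH[of c y] by (simp add: algebra_simps)
  qed
  moreover have "\<mu> (Suc e - 1) = lam (Suc e)" by (simp add: \<mu>_def)
  ultimately show ?case by blast
qed

lemma card_additive:
  fixes H :: "'a::{ab_group_add} \<Rightarrow> 'b::ab_group_add"
  assumes add: "\<And>x y. H (x + y) = H x + H y" and fin: "finite (UNIV::'a set)"
  shows "card A \<le> card (H ` A) * card {x. H x = 0}"
proof -
  have diff: "H (x - y) = H x - H y" for x y
    using add[of "x - y" y] by (simp add: eq_diff_eq)
  define s where "s = inv_into A H"
  define \<phi> where "\<phi> y = (H y, y - s (H y))" for y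
  have "inj_on \<phi> A"
    by (rule inj_onI) (auto simp: \<phi>_def)
  moreover have "\<phi> ` A \<subseteq> H ` A \<times> {x. H x = 0}"
  proof
    fix z assume "z \<in> \<phi> ` A"
    then obtain y where y: "y \<in> A" "z = \<phi> y" by blast
    have "H (s (H y)) = H y" unfolding s_def using y(1) by (simp add: f_inv_into_f)
    thus "z \<in> H ` A \<times> {x. H x = 0}" using y by (simp add: \<phi>_def diff)
  qed
  ultimately have "card A \<le> card (H ` A \<times> {x. H x = 0})"
    by (intro card_inj_on_le) (auto intro: finite_subset[OF _ fin])
  thus ?thesis by (simp add: card_cartesian_product)
qed

lemma card_comp_ker:
  fixes H :: "'k \<Rightarrow> 'k"
  assumes add: "\<And>x y. H (x + y) = H x + H y"
  shows "card {y. G (H y) = 0} \<le> card {z. G z = (0::'k)} * card {y. H y = 0}"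
proof -
  have 1: "card {y. G (H y) = 0} \<le> card (H ` {y. G (H y) = 0}) * card {y. H y = 0}"
    by (rule card_additive[OF add]) simp
  have 2: "card (H ` {y. G (H y) = 0}) \<le> card {z. G z = 0}"
    by (rule card_mono) auto
  show ?thesis using 1 mult_le_mono1[OF 2, of "card {y. H y = 0}"] by linarith
qed

end
locale fqg = fqs emb q for emb :: "'f::{finite,field} \<Rightarrow> 'k::{finite,field}" and q :: nat +
  fixes m :: nat and \<gamma> :: 'k
  assumes m: "m \<ge> 1" and card_k: "CARD('k) = q ^ m"
    and g0: "\<gamma> \<noteq> 0" and gen: "\<forall>x::'k. x \<noteq> 0 \<longrightarrow> (\<exists>e::nat. x = \<gamma> ^ e)"
begin

lemma qm2: "q ^ m \<ge> 2"
proof -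
  have "q ^ 1 \<le> q ^ m" using m q2 by (intro power_increasing) auto
  thus ?thesis using q2 by simp
qed

lemma gpow_N: "\<gamma> ^ (q ^ m - 1) = 1"
proof -
  have "\<gamma> ^ CARD('k) = \<gamma>" by (rule fin_field_pow_card)
  hence "\<gamma> * \<gamma> ^ (q ^ m - 1) = \<gamma> * 1"
    using qm2 card_k by (metis mult.commute mult.right_neutral power_minus_mult not_gr0 not_numeral_le_zero)
  thus ?thesis using g0 by simp
qed

lemma gpow_mod: "\<gamma> ^ e = \<gamma> ^ (e mod (q ^ m - 1))"
proof -
  have "\<gamma> ^ e = \<gamma> ^ ((q ^ m - 1) * (e div (q ^ m - 1)) + e mod (q ^ m - 1))" by simp
  also have "\<dots> = \<gamma> ^ (e mod (q ^ m - 1))"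
    by (simp only: power_add power_mult gpow_N power_one mult_1)
  finally show ?thesis .
qed

lemma gpow_inj:
  assumes "\<gamma> ^ a = \<gamma> ^ b"
  shows "a mod (q ^ m - 1) = b mod (q ^ m - 1)"
proof -
  define N where "N = q ^ m - 1"
  have N0: "N > 0" unfolding N_def using qm2 by simp
  have img: "(\<lambda>e. \<gamma> ^ e) ` {..<N} = UNIV - {0}"
  proof
    show "(\<lambda>e. \<gamma> ^ e) ` {..<N} \<subseteq> UNIV - {0}" using g0 by auto
    show "UNIV - {0} \<subseteq> (\<lambda>e. \<gamma> ^ e) ` {..<N}"
    proof
      fix x :: 'k assume "x \<in> UNIV - {0}"
      then obtain e where "x = \<gamma> ^ e" using gen by auto
      hence "x = \<gamma> ^ (e mod N)" using gpow_mod unfolding N_def by simp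
      moreover have "e mod N < N" using N0 by simp
      ultimately show "x \<in> (\<lambda>e. \<gamma> ^ e) ` {..<N}" by blast
    qed
  qed
  have "card (UNIV - {0::'k}) = N" unfolding N_def using card_k by (simp add: card_Diff_singleton)
  hence "inj_on (\<lambda>e. \<gamma> ^ e) {..<N}" by (intro eq_card_imp_inj_on) (simp_all add: img)
  moreover have "\<gamma> ^ (a mod N) = \<gamma> ^ (b mod N)" using assms gpow_mod unfolding N_def by metis
  moreover have "a mod N < N" "b mod N < N" using N0 by simp_all
  ultimately show ?thesis unfolding N_def[symmetric] by (auto dest: inj_onD)
qed

lemma qdvd: "(q - 1) dvd (q ^ m - 1)"
proof -
  have "q mod (q - 1) = 1 mod (q - 1)"
  proof -
    have e: "1 + (q - 1) = q" using q2 by simp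
    show ?thesis using mod_add_self2[of 1 "q - 1"] unfolding e .
  qed
  note qmod = this
  have "q ^ m mod (q - 1) = (q mod (q - 1)) ^ m mod (q - 1)" by (simp only: power_mod)
  also have "\<dots> = (1 mod (q - 1)) ^ m mod (q - 1)" by (simp only: qmod)
  also have "\<dots> = 1 mod (q - 1)" by (simp only: power_mod power_one)
  finally have "q ^ m mod (q - 1) = 1 mod (q - 1)" .
  moreover have "1 \<le> q ^ m" using qm2 by simp
  ultimately show ?thesis using mod_eq_dvd_iff_nat by blast
qed

lemma not_pow:
  assumes l: "l < q - 1" "l0 < q - 1" and y: "y \<noteq> 0" "z \<noteq> 0"
    and eq: "\<gamma> ^ l * y ^ (q - 1) = \<gamma> ^ l0 * z ^ (q - 1)"
  shows "l = l0"
proof -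
  obtain e1 e2 where e: "y = \<gamma> ^ e1" "z = \<gamma> ^ e2" using gen y by blast
  have "\<gamma> ^ (l + e1 * (q - 1)) = \<gamma> ^ (l0 + e2 * (q - 1))"
    using eq unfolding e by (simp add: power_add power_mult)
  hence "(l + e1 * (q - 1)) mod (q ^ m - 1) = (l0 + e2 * (q - 1)) mod (q ^ m - 1)"
    by (rule gpow_inj)
  hence "(l + e1 * (q - 1)) mod (q ^ m - 1) mod (q - 1) = (l0 + e2 * (q - 1)) mod (q ^ m - 1) mod (q - 1)"
    by simp
  hence "(l + e1 * (q - 1)) mod (q - 1) = (l0 + e2 * (q - 1)) mod (q - 1)"
    using qdvd by (simp add: mod_mod_cancel)
  thus ?thesis using l by simp
qed

lemma ker_other:
  assumes l: "l < q - 1" "l0 < q - 1" "l \<noteq> l0" and b: "\<beta> \<noteq> 0"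
  shows "card {y. \<gamma> ^ l * y ^ q - (\<gamma> ^ l0 * \<beta> ^ (q - 1)) * y = 0} \<le> 1"
proof -
  have "{y. \<gamma> ^ l * y ^ q - (\<gamma> ^ l0 * \<beta> ^ (q - 1)) * y = 0} \<subseteq> {0}"
  proof
    fix y assume "y \<in> {y. \<gamma> ^ l * y ^ q - (\<gamma> ^ l0 * \<beta> ^ (q - 1)) * y = 0}"
    hence h: "\<gamma> ^ l * y ^ q = (\<gamma> ^ l0 * \<beta> ^ (q - 1)) * y" by simp
    show "y \<in> {0}"
    proof (rule ccontr)
      assume "y \<notin> {0}"
      hence y0: "y \<noteq> 0" by simp
      have "y ^ q = y ^ (q - 1) * y" by (rule power_minus_mult[symmetric]) (use q2 in simp)
      hence "(\<gamma> ^ l * y ^ (q - 1)) * y = (\<gamma> ^ l0 * \<beta> ^ (q - 1)) * y" using h by (simp add: mult_ac)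
      hence "\<gamma> ^ l * y ^ (q - 1) = \<gamma> ^ l0 * \<beta> ^ (q - 1)" using y0 by simp
      thus False using not_pow[OF l(1,2) y0 b] l(3) by simp
    qed
  qed
  hence "card {y. \<gamma> ^ l * y ^ q - (\<gamma> ^ l0 * \<beta> ^ (q - 1)) * y = 0} \<le> card {0::'k}"
    by (rule card_mono[rotated]) simp
  thus ?thesis by simp
qed

lemma ker_same:
  assumes c: "(c::'k) \<noteq> 0"
  shows "card {y. c * y ^ q - a * y = 0} \<le> q"
proof -
  define P where "P = monom c q - [:0, a:]"
  have poly: "poly P y = c * y ^ q - a * y" for y unfolding P_def by (simp add: poly_monom)
  have cq: "coeff P q = c" unfolding P_def using q2
    by (cases q) (auto simp: coeff_monom coeff_pCons split: nat.splits)
  hence "P \<noteq> 0" using c by auto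
  hence "card {y. poly P y = 0} \<le> degree P" by (rule card_poly_roots_bound)
  moreover have "degree P \<le> q" unfolding P_def using q2
    by (intro order.trans[OF degree_diff_le_max]) (auto simp: degree_monom_le degree_pCons_le)
  ultimately show ?thesis unfolding poly by simp
qed

lemma main_claim:
  "(lam :: nat \<Rightarrow> 'k) d \<noteq> 0 \<Longrightarrow> (\<Prod>l<q - 1. card {y. Ev q lam (Suc d) (\<gamma> ^ l) y = 0}) \<le> q ^ d"
proof (induction d arbitrary: lam)
  case 0
  have "(\<Prod>l<q - 1. card {y. Ev q lam (Suc 0) (\<gamma> ^ l) y = 0}) \<le> (\<Prod>l<q - 1. 1)"
  proof (rule prod_mono)
    fix l assume "l \<in> {..<q - 1}"
    have "{y. Ev q lam (Suc 0) (\<gamma> ^ l) y = 0} \<subseteq> {0}" using 0 by (auto simp: Ev_def)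
    hence "card {y. Ev q lam (Suc 0) (\<gamma> ^ l) y = 0} \<le> card {0::'k}" by (intro card_mono) auto
    thus "0 \<le> card {y. Ev q lam (Suc 0) (\<gamma> ^ l) y = 0} \<and> card {y. Ev q lam (Suc 0) (\<gamma> ^ l) y = 0} \<le> 1"
      by simp
  qed
  thus ?case by simp
next
  case (Suc e)
  show ?case
  proof (cases "\<exists>l0<q - 1. \<exists>\<beta>. \<beta> \<noteq> 0 \<and> Ev q lam (Suc (Suc e)) (\<gamma> ^ l0) \<beta> = 0")
    case False
    have "(\<Prod>l<q - 1. card {y. Ev q lam (Suc (Suc e)) (\<gamma> ^ l) y = 0}) \<le> (\<Prod>l<q - 1. 1)"
    proof (rule prod_mono)
      fix l assume "l \<in> {..<q - 1}"
      hence "{y. Ev q lam (Suc (Suc e)) (\<gamma> ^ l) y = 0} \<subseteq> {0}" using False by auto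
      hence "card {y. Ev q lam (Suc (Suc e)) (\<gamma> ^ l) y = 0} \<le> card {0::'k}" by (intro card_mono) auto
      thus "0 \<le> card {y. Ev q lam (Suc (Suc e)) (\<gamma> ^ l) y = 0} \<and> card {y. Ev q lam (Suc (Suc e)) (\<gamma> ^ l) y = 0} \<le> 1"
        by simp
    qed
    also have "\<dots> \<le> q ^ Suc e" using q2 by simp
    finally show ?thesis .
  next
    case True
    then obtain l0 \<beta> where l0: "l0 < q - 1" and b0: "\<beta> \<noteq> 0" and root: "Ev q lam (Suc (Suc e)) (\<gamma> ^ l0) \<beta> = 0"
      by blast
    define a where "a = \<gamma> ^ l0 * \<beta> ^ (q - 1)"
    obtain \<mu> r where div: "\<And>c y. Ev q lam (Suc (Suc e)) c y = Ev q \<mu> (Suc e) c (c * y ^ q - a * y) + r * y"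
      and mu: "\<mu> e = lam (Suc e)"
      using division[of lam "Suc e" a] by auto
    have "\<gamma> ^ l0 * \<beta> ^ q - a * \<beta> = 0"
    proof -
      have bq: "\<beta> ^ (q - 1) * \<beta> = \<beta> ^ q" by (rule power_minus_mult) (use q2 in simp)
      show ?thesis unfolding a_def mult.assoc bq by simp
    qed
    hence "r * \<beta> = 0" using root div[of "\<gamma> ^ l0" \<beta>] by (simp add: Ev_zero)
    hence r0: "r = 0" using b0 by simp
    define G where "G l = Ev q \<mu> (Suc e) (\<gamma> ^ l)" for l
    define H where "H l y = \<gamma> ^ l * y ^ q - a * y" for l y
    have Hadd: "H l (x + y) = H l x + H l y" for l x y
      unfolding H_def by (simp add: padd algebra_simps)
    have sets: "{y. Ev q lam (Suc (Suc e)) (\<gamma> ^ l) y = 0} = {y. G l (H l y) = 0}" for l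
      unfolding G_def H_def using div r0 by simp
    have "(\<Prod>l<q - 1. card {y. Ev q lam (Suc (Suc e)) (\<gamma> ^ l) y = 0})
        \<le> (\<Prod>l<q - 1. card {z. G l z = 0} * card {y. H l y = 0})"
      unfolding sets by (intro prod_mono conjI card_comp_ker Hadd) simp
    also have "\<dots> = (\<Prod>l<q - 1. card {z. G l z = 0}) * (\<Prod>l<q - 1. card {y. H l y = 0})"
      by (rule prod.distrib)
    also have "\<dots> \<le> q ^ e * q"
    proof (rule mult_le_mono)
      show "(\<Prod>l<q - 1. card {z. G l z = 0}) \<le> q ^ e"
        unfolding G_def using Suc.IH[of \<mu>] Suc.prems mu by simp
      have "(\<Prod>l<q - 1. card {y. H l y = 0}) \<le> (\<Prod>l<q - 1. if l = l0 then q else 1)"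
      proof (rule prod_mono)
        fix l assume l: "l \<in> {..<q - 1}"
        show "0 \<le> card {y. H l y = 0} \<and> card {y. H l y = 0} \<le> (if l = l0 then q else 1)"
        proof (cases "l = l0")
          case True
          thus ?thesis unfolding H_def using ker_same[of "\<gamma> ^ l" a] g0 by simp
        next
          case False
          thus ?thesis unfolding H_def a_def using ker_other[of l l0 \<beta>] l l0 b0 by simp
        qed
      qed
      also have "\<dots> = q" using l0 by (simp add: prod.delta)
      finally show "(\<Prod>l<q - 1. card {y. H l y = 0}) \<le> q" .
    qed
    also have "\<dots> = q ^ Suc e" by simp
    finally show ?thesis .
  qed
qed

end
lemma coord_ex1:
  assumes e: "field_emb emb" and B: "is_basis_Fq emb m b"
  shows "\<exists>!v. v \<in> carrier_vec m \<and> x = (\<Sum>t<m. emb (v $ t) * b t)"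
proof -
  obtain c where c: "x = (\<Sum>j<m. emb (c j) * b j)" using B unfolding is_basis_Fq_def by blast
  have ex: "vec m c \<in> carrier_vec m \<and> x = (\<Sum>t<m. emb (vec m c $ t) * b t)"
    unfolding c by (auto intro: sum.cong)
  have un: "v = w" if v: "v \<in> carrier_vec m" "x = (\<Sum>t<m. emb (v $ t) * b t)"
    and w: "w \<in> carrier_vec m" "x = (\<Sum>t<m. emb (w $ t) * b t)" for v w
  proof -
    have "(\<Sum>t<m. emb (v $ t - w $ t) * b t) = (\<Sum>t<m. emb (v $ t) * b t) - (\<Sum>t<m. emb (w $ t) * b t)"
      by (simp add: field_emb_minus[OF e] left_diff_distrib sum_subtractf)
    also have "\<dots> = 0" using v w by simp
    finally have z: "(\<Sum>t<m. emb ((\<lambda>t. v $ t - w $ t) t) * b t) = 0" by simp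
    have "\<forall>j<m. v $ j - w $ j = 0"
      using B[unfolded is_basis_Fq_def lin_indep_Fq_def, THEN conjunct1, THEN spec[of _ "\<lambda>t. v $ t - w $ t"], THEN mp, OF z] by simp
    thus "v = w" using v(1) w(1) by (intro eq_vecI) auto
  qed
  show ?thesis using ex un by blast
qed

lemma coord_prop:
  assumes e: "field_emb emb" and B: "is_basis_Fq emb m b"
  shows "coord emb m b x \<in> carrier_vec m \<and> x = (\<Sum>t<m. emb (coord emb m b x $ t) * b t)"
  unfolding coord_def by (rule theI'[OF coord_ex1[OF e B]])

lemma coord_unique:
  assumes e: "field_emb emb" and B: "is_basis_Fq emb m b"
    and v: "v \<in> carrier_vec m" "x = (\<Sum>t<m. emb (v $ t) * b t)"
  shows "coord emb m b x = v"
  unfolding coord_def by (rule the1_equality[OF coord_ex1[OF e B]]) (use v in blast)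

lemma coord_inj:
  assumes e: "field_emb emb" and B: "is_basis_Fq emb m b"
    and "coord emb m b x = coord emb m b y"
  shows "x = y"
  using coord_prop[OF e B, of x] coord_prop[OF e B, of y] assms(3) by metis

lemma coord_lin:
  assumes e: "field_emb emb" and B: "is_basis_Fq emb m b"
  shows "coord emb m b (\<Sum>j<m. emb (c j) * z j) = vec m (\<lambda>i. \<Sum>j<m. c j * coord emb m b (z j) $ i)"
proof (rule coord_unique[OF e B])
  show "vec m (\<lambda>i. \<Sum>j<m. c j * coord emb m b (z j) $ i) \<in> carrier_vec m" by simp
  have "(\<Sum>t<m. emb (vec m (\<lambda>i. \<Sum>j<m. c j * coord emb m b (z j) $ i) $ t) * b t)
      = (\<Sum>t<m. emb (\<Sum>j<m. c j * coord emb m b (z j) $ t) * b t)"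
    by (rule sum.cong) auto
  also have "\<dots> = (\<Sum>t<m. \<Sum>j<m. emb (c j) * (emb (coord emb m b (z j) $ t) * b t))"
    using e by (simp add: field_emb_sum sum_distrib_right field_emb_def mult.assoc)
  also have "\<dots> = (\<Sum>j<m. \<Sum>t<m. emb (c j) * (emb (coord emb m b (z j) $ t) * b t))"
    by (rule sum.swap)
  also have "\<dots> = (\<Sum>j<m. emb (c j) * (\<Sum>t<m. emb (coord emb m b (z j) $ t) * b t))"
    by (simp add: sum_distrib_left)
  also have "\<dots> = (\<Sum>j<m. emb (c j) * z j)"
    using coord_prop[OF e B] by simp
  finally show "(\<Sum>j<m. emb (c j) * z j) = (\<Sum>t<m. emb (vec m (\<lambda>i. \<Sum>j<m. c j * coord emb m b (z j) $ i) $ t) * b t)"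
    by simp
qed

lemma span_beta:
  fixes emb :: "'f::{finite,field} \<Rightarrow> 'k::{finite,field}"
  assumes e: "field_emb emb" and ind: "lin_indep_Fq emb m \<beta>" and ck: "CARD('k) = CARD('f) ^ m"
  shows "\<exists>c. y = (\<Sum>j<m. emb (c j) * \<beta> j)"
proof -
  define P where "P = ({..<m} \<rightarrow>\<^sub>E (UNIV::'f set))"
  define \<phi> where "\<phi> c = (\<Sum>j<m. emb (c j) * \<beta> j)" for c
  have "inj_on \<phi> P"
  proof (rule inj_onI)
    fix c c' assume c: "c \<in> P" "c' \<in> P" and eq: "\<phi> c = \<phi> c'"
    have "(\<Sum>j<m. emb (c j - c' j) * \<beta> j) = \<phi> c - \<phi> c'"
      unfolding \<phi>_def by (simp add: field_emb_minus[OF e] left_diff_distrib sum_subtractf)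
    also have "\<dots> = 0" using eq by simp
    finally have z: "(\<Sum>j<m. emb ((\<lambda>j. c j - c' j) j) * \<beta> j) = 0" by simp
    have "\<forall>j<m. c j - c' j = 0" using ind[unfolded lin_indep_Fq_def, THEN spec[of _ "\<lambda>j. c j - c' j"], THEN mp, OF z] by simp
    thus "c = c'" using c unfolding P_def
      by (intro extensionalityI[of _ "{..<m}"]) (auto simp: PiE_iff)
  qed
  hence "card (\<phi> ` P) = card P" by (rule card_image)
  also have "card P = CARD('f) ^ m" unfolding P_def by (simp add: card_PiE)
  finally have "\<phi> ` P = UNIV" using ck by (intro card_eq_UNIV_imp_eq_UNIV) simp_all
  thus ?thesis unfolding \<phi>_def by blast
qed
lemma finite_carrier_vec_fin: "finite (carrier_vec n :: 'a::finite vec set)"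
proof -
  have "carrier_vec n \<subseteq> (\<lambda>c. vec n c) ` ({..<n} \<rightarrow>\<^sub>E (UNIV::'a set))"
  proof
    fix v :: "'a vec" assume v: "v \<in> carrier_vec n"
    have "v = vec n (restrict (\<lambda>i. v $ i) {..<n})" using v by (intro eq_vecI) auto
    moreover have "restrict (\<lambda>i. v $ i) {..<n} \<in> {..<n} \<rightarrow>\<^sub>E (UNIV::'a set)" by simp
    ultimately show "v \<in> (\<lambda>c. vec n c) ` ({..<n} \<rightarrow>\<^sub>E (UNIV::'a set))" by (rule image_eqI)
  qed
  thus ?thesis by (rule finite_subset) (intro finite_imageI finite_PiE; simp)
qed

theorem theoremF2:
  fixes emb :: "'f::{finite,field} \<Rightarrow> 'k::{finite,field}"
    and q m n k :: nat and \<gamma> :: 'k and \<beta> b lam :: "nat \<Rightarrow> 'k"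
  assumes emb: "field_emb emb"
    and q: "q = CARD('f)"
    and m: "m \<ge> 1"
    and card_k: "CARD('k) = q ^ m"
    and basis: "is_basis_Fq emb m b"
    and gen: "\<gamma> \<noteq> 0" "\<forall>x::'k. x \<noteq> 0 \<longrightarrow> (\<exists>e::nat. x = \<gamma> ^ e)"
    and beta: "lin_indep_Fq emb m \<beta>"
    and n: "n = (q - 1) * m"
    and k: "1 \<le> k" "k \<le> n"
    and lam: "\<exists>i<k. lam i \<noteq> 0"
  shows "(\<Sum>l<q - 1. rk_Fq emb m b (lamM q k \<gamma> \<beta> lam l)) \<ge> n - k + 1"
proof -
  interpret G: fqg emb q m \<gamma>
    by unfold_locales (use emb q m card_k gen in auto)
  have q2: "q \<ge> 2" by (rule G.q2)
  define R where "R l = rk_Fq emb m b (lamM q k \<gamma> \<beta> lam l)" for l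
  define Kr where "Kr l = card {y. Ev q lam k (\<gamma> ^ l) y = 0}" for l
  have per: "q ^ m \<le> q ^ R l * Kr l" for l
  proof -
    define f where "f = Ev q lam k (\<gamma> ^ l)"
    have lamM_eq: "lamM q k \<gamma> \<beta> lam l = (\<lambda>j. f (\<beta> j))"
      unfolding lamM_def M_entry_def f_def Ev_def G.D_formula by (simp add: power_mult)
    define A where "A = coord_mat emb m b (\<lambda>j. f (\<beta> j))"
    have Acar: "A \<in> carrier_mat m m" unfolding A_def coord_mat_def by simp
    have c1: "card (UNIV::'k set) \<le> card (f ` UNIV) * card {y. f y = 0}"
      by (rule G.card_additive) (simp_all add: f_def G.Ev_add)
    have ck: "CARD('k) = CARD('f) ^ m" using card_k q by simp
    have sub: "coord emb m b ` (f ` UNIV) \<subseteq> {A *\<^sub>v x |x. x \<in> carrier_vec m}"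
    proof
      fix w assume "w \<in> coord emb m b ` (f ` UNIV)"
      then obtain y where w: "w = coord emb m b (f y)" by blast
      obtain c where c: "y = (\<Sum>j<m. emb (c j) * \<beta> j)" using span_beta[OF emb beta ck] by blast
      have "f y = (\<Sum>j<m. emb (c j) * f (\<beta> j))" unfolding c f_def by (rule G.Ev_sum)
      hence "w = vec m (\<lambda>i. \<Sum>j<m. c j * coord emb m b (f (\<beta> j)) $ i)"
        unfolding w by (simp add: coord_lin[OF emb basis])
      also have "\<dots> = A *\<^sub>v vec m c"
        by (rule eq_vecI) (auto simp: A_def coord_mat_def scalar_prod_def atLeast0LessThan mult.commute intro!: sum.cong)
      finally show "w \<in> {A *\<^sub>v x |x. x \<in> carrier_vec m}" by auto
    qed
    have fin: "finite {A *\<^sub>v x |x. x \<in> carrier_vec m}"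
    proof -
      have "{A *\<^sub>v x |x. x \<in> carrier_vec m} = (\<lambda>x. A *\<^sub>v x) ` carrier_vec m" by blast
      thus ?thesis using finite_imageI[OF finite_carrier_vec_fin[of m], of "\<lambda>x. A *\<^sub>v x"] by simp
    qed
    have inj: "inj_on (coord emb m b) (f ` UNIV)"
      by (rule inj_onI) (rule coord_inj[OF emb basis])
    have c2: "card (f ` UNIV) \<le> card {A *\<^sub>v x |x. x \<in> carrier_vec m}"
      by (rule card_inj_on_le[OF inj sub fin])
    have c3: "card {A *\<^sub>v x |x. x \<in> carrier_vec m} \<le> CARD('f) ^ vec_space.rank m A"
      by (rule vec_space.col_space_card[OF Acar]) simp
    have RA: "R l = vec_space.rank m A" unfolding R_def rk_Fq_def lamM_eq A_def ..
    have "q ^ m \<le> card (f ` UNIV) * Kr l" using c1 card_k unfolding Kr_def f_def by simp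
    also have "\<dots> \<le> q ^ R l * Kr l" using c2 c3 RA q by (intro mult_le_mono1) simp
    finally show ?thesis .
  qed
  have P1: "(\<Prod>l<q - 1. q ^ m) \<le> (\<Prod>l<q - 1. q ^ R l * Kr l)"
    by (rule prod_mono) (simp add: per)
  have P2: "(\<Prod>l<q - 1. q ^ R l * Kr l) = q ^ (\<Sum>l<q - 1. R l) * (\<Prod>l<q - 1. Kr l)"
    by (simp add: prod.distrib power_sum)
  define S where "S = {i. i < k \<and> lam i \<noteq> 0}"
  have Sfin: "finite S" and Sne: "S \<noteq> {}" unfolding S_def using lam by auto
  define d where "d = Max S"
  have dS: "d \<in> S" unfolding d_def using Sfin Sne by (rule Max_in)
  hence dk: "d < k" and ld: "lam d \<noteq> 0" unfolding S_def by auto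
  have above: "lam i = 0" if "d < i" "i < k" for i
  proof (rule ccontr)
    assume "lam i \<noteq> 0"
    hence "i \<in> S" unfolding S_def using that by auto
    hence "i \<le> d" unfolding d_def using Sfin by simp
    thus False using that by simp
  qed
  have Evk: "Ev q lam k c y = Ev q lam (Suc d) c y" for c y
    unfolding Ev_def by (rule sum.mono_neutral_right) (use dk above in auto)
  have "(\<Prod>l<q - 1. Kr l) \<le> q ^ d"
    unfolding Kr_def Evk by (rule G.main_claim[of lam d, OF ld])
  also have "\<dots> \<le> q ^ (k - 1)" using dk q2 by (intro power_increasing) auto
  finally have P3: "(\<Prod>l<q - 1. Kr l) \<le> q ^ (k - 1)" .
  have "q ^ ((q - 1) * m) = (q ^ m) ^ (q - 1)" by (simp only: power_mult mult.commute)
  also have "\<dots> = (\<Prod>l<q - 1. q ^ m)" by simp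
  also have "\<dots> \<le> q ^ (\<Sum>l<q - 1. R l) * (\<Prod>l<q - 1. Kr l)" using P1 unfolding P2 .
  also have "\<dots> \<le> q ^ (\<Sum>l<q - 1. R l) * q ^ (k - 1)" by (rule mult_le_mono2[OF P3])
  also have "\<dots> = q ^ ((\<Sum>l<q - 1. R l) + (k - 1))" by (simp only: power_add)
  finally have cal: "q ^ ((q - 1) * m) \<le> q ^ ((\<Sum>l<q - 1. R l) + (k - 1))" .
  have "(q - 1) * m \<le> (\<Sum>l<q - 1. R l) + (k - 1)"
    by (rule power_le_imp_le_exp[OF _ cal]) (use q2 in simp)
  hence "n \<le> (\<Sum>l<q - 1. R l) + (k - 1)" unfolding n .
  hence "n - k + 1 \<le> (\<Sum>l<q - 1. R l)" using k by linarith
  thus ?thesis unfolding R_def .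
qed
end
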